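(* Let $a<b$, $n\ge1$ an integer, $y\in C^1[a,b]$, and $x_k=a+\tfrac{k}{n}(b-a)$ for $0\le k\le n$. Then \[\sup_{x\in[a,b]}|y(x)|\le \max_{0\le k\le n-1}\Bigl\{\tfrac12\bigl|y(x_k)+y(x_{k+1})\bigr|+\tfrac12\sqrt{\tfrac{b-a}{n}}\Bigl(\int_{x_k}^{x_{k+1}}y'(t)^2\,dt\Bigr)^{1/2}\Bigr\}.\] *)

theory Defs
  imports "HOL-Analysis.Analysis"
begin

end

theory Submission
  imports Defs
begin

lemma cs_int:
  fixes c d :: real and f :: "real \<Rightarrow> real"
  assumes "c \<le> d" "continuous_on {c..d} f"
  shows "integral {c..d} (\<lambda>t. \<bar>f t\<bar>) \<le> sqrt (d - c) * sqrt (integral {c..d} (\<lambda>t. (f t)^2))"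
proof -
  define J where "J = integral {c..d} (\<lambda>t. \<bar>f t\<bar>)"
  define I where "I = integral {c..d} (\<lambda>t. (f t)^2)"
  define L where "L = d - c"
  have ia: "(\<lambda>t. \<bar>f t\<bar>) integrable_on {c..d}"
    by (intro integrable_continuous_interval continuous_intros assms)
  have i2: "(\<lambda>t. (f t)^2) integrable_on {c..d}"
    by (intro integrable_continuous_interval continuous_intros assms)
  have J0: "J \<ge> 0" unfolding J_def by (rule integral_nonneg[OF ia]) auto
  show ?thesis
  proof (cases "c = d")
    case True then show ?thesis by simp
  next
    case False
    then have Lp: "L > 0" using assms unfolding L_def by auto
    define l where "l = J / L"
    have "0 \<le> integral {c..d} (\<lambda>t. (\<bar>f t\<bar> - l)^2)"
      by (rule integral_nonneg) (auto intro!: integrable_continuous_interval continuous_intros assms)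
    also have "(\<lambda>t. (\<bar>f t\<bar> - l)^2) = (\<lambda>t. ((f t)^2 - (2*l) * \<bar>f t\<bar>) + l^2)"
      by (auto simp: power2_eq_square algebra_simps)
    also have "integral {c..d} \<dots> = I - 2*l*J + L * l^2"
    proof -
      have m: "(\<lambda>t. (2*l) * \<bar>f t\<bar>) integrable_on {c..d}" by (intro integrable_continuous_interval continuous_intros assms)
      have "integral {c..d} (\<lambda>t. ((f t)^2 - (2*l) * \<bar>f t\<bar>) + l^2)
          = integral {c..d} (\<lambda>t. (f t)^2 - (2*l) * \<bar>f t\<bar>) + integral {c..d} (\<lambda>t. l^2)"
        by (rule integral_add) (auto intro: integrable_diff i2 m)
      also have "integral {c..d} (\<lambda>t. (f t)^2 - (2*l) * \<bar>f t\<bar>) = I - 2*l*J"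
        unfolding I_def J_def by (simp add: integral_diff[OF i2 m])
      finally show ?thesis using assms by (simp add: L_def)
    qed
    also have "\<dots> = I - J^2 / L" using Lp unfolding l_def by (simp add: field_simps power2_eq_square)
    finally have "J^2 \<le> L * I" using Lp by (simp add: field_simps)
    then have "sqrt (J^2) \<le> sqrt (L*I)" by (rule real_sqrt_le_mono)
    then show ?thesis using J0 unfolding J_def I_def L_def by (simp add: real_sqrt_mult)
  qed
qed

lemma abs_helper:
  fixes p q r S :: real assumes "\<bar>p - q\<bar> + \<bar>r - p\<bar> \<le> S"
  shows "\<bar>p\<bar> \<le> 1/2 * \<bar>q + r\<bar> + 1/2 * S"
proof -
  have "\<bar>2*p\<bar> \<le> \<bar>q + r\<bar> + \<bar>p - q\<bar> + \<bar>r - p\<bar>"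
    using abs_triangle_ineq[of "q+r" "(p-q) - (r-p)"] abs_triangle_ineq4[of "p-q" "r-p"] by simp
  then have "2*\<bar>p\<bar> \<le> \<bar>q + r\<bar> + S" using assms by (simp add: abs_mult)
  then show ?thesis by simp
qed

lemma interval_bound:
  fixes c d x :: real and y y' :: "real \<Rightarrow> real"
  assumes cd: "c \<le> d" and cont: "continuous_on {c..d} y'"
    and der: "\<And>x. x \<in> {c..d} \<Longrightarrow> (y has_real_derivative y' x) (at x within {c..d})"
    and x: "x \<in> {c..d}"
  shows "\<bar>y x\<bar> \<le> (1/2) * \<bar>y c + y d\<bar> + (1/2) * sqrt (d - c) * sqrt (integral {c..d} (\<lambda>t. (y' t)^2))"
proof -
  have F1: "(y' has_integral (y x - y c)) {c..x}"
  proof (rule fundamental_theorem_of_calculus)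
    show "c \<le> x" using x by simp
    fix t assume "t \<in> {c..x}"
    then show "(y has_vector_derivative y' t) (at t within {c..x})"
      using der[of t] x unfolding has_real_derivative_iff_has_vector_derivative[symmetric]
      by (auto intro: has_field_derivative_subset)
  qed
  have F2: "(y' has_integral (y d - y x)) {x..d}"
  proof (rule fundamental_theorem_of_calculus)
    show "x \<le> d" using x by simp
    fix t assume "t \<in> {x..d}"
    then show "(y has_vector_derivative y' t) (at t within {x..d})"
      using der[of t] x unfolding has_real_derivative_iff_has_vector_derivative[symmetric]
      by (auto intro: has_field_derivative_subset)
  qed
  have ia: "(\<lambda>t. \<bar>y' t\<bar>) integrable_on {c..d}"
    by (intro integrable_continuous_interval continuous_intros cont)
  have ia1: "(\<lambda>t. \<bar>y' t\<bar>) integrable_on {c..x}"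
    by (rule integrable_on_subinterval[OF ia]) (use x in auto)
  have ia2: "(\<lambda>t. \<bar>y' t\<bar>) integrable_on {x..d}"
    by (rule integrable_on_subinterval[OF ia]) (use x in auto)
  have A: "\<bar>y x - y c\<bar> \<le> integral {c..x} (\<lambda>t. \<bar>y' t\<bar>)"
    using integral_norm_bound_integral[OF has_integral_integrable[OF F1] ia1] F1
    by (simp add: integral_unique)
  have B: "\<bar>y d - y x\<bar> \<le> integral {x..d} (\<lambda>t. \<bar>y' t\<bar>)"
    using integral_norm_bound_integral[OF has_integral_integrable[OF F2] ia2] F2
    by (simp add: integral_unique)
  have C: "integral {c..x} (\<lambda>t. \<bar>y' t\<bar>) + integral {x..d} (\<lambda>t. \<bar>y' t\<bar>) = integral {c..d} (\<lambda>t. \<bar>y' t\<bar>)"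
    using Henstock_Kurzweil_Integration.integral_combine[where a=c and c=x and b=d] x ia by auto
  have D: "integral {c..d} (\<lambda>t. \<bar>y' t\<bar>) \<le> sqrt (d - c) * sqrt (integral {c..d} (\<lambda>t. (y' t)^2))"
    by (rule cs_int[OF cd cont])
  have "2 * \<bar>y x\<bar> \<le> \<bar>y c + y d\<bar> + \<bar>y x - y c\<bar> + \<bar>y d - y x\<bar>" by linarith
  moreover obtain S where S: "S = sqrt (d - c) * sqrt (integral {c..d} (\<lambda>t. (y' t)^2))" by blast
  ultimately have E: "\<bar>y x - y c\<bar> + \<bar>y d - y x\<bar> \<le> S" using A B C D by linarith
  have "\<bar>y x\<bar> \<le> (1/2) * \<bar>y c + y d\<bar> + (1/2) * S" using abs_helper[OF E] by simp
  then show ?thesis using S by (simp add: mult.assoc)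
qed

theorem lemma9p2:
  fixes a b :: real and n :: nat and y y' :: "real \<Rightarrow> real"
  assumes "a < b" and "n \<ge> 1"
    and "continuous_on {a..b} y'"
    and "\<And>x. x \<in> {a..b} \<Longrightarrow> (y has_real_derivative y' x) (at x within {a..b})"
  defines "xk \<equiv> (\<lambda>k::nat. a + (real k / real n) * (b - a))"
  shows "(SUP x\<in>{a..b}. \<bar>y x\<bar>) \<le>
    (MAX k \<in> {0..n-1}. (1/2) * \<bar>y (xk k) + y (xk (k+1))\<bar>
       + (1/2) * sqrt ((b - a) / real n) * sqrt (integral {xk k..xk (k+1)} (\<lambda>t. (y' t)^2)))"
proof -
  define F where "F = (\<lambda>k. (1/2) * \<bar>y (xk k) + y (xk (k+1))\<bar>
       + (1/2) * sqrt ((b - a) / real n) * sqrt (integral {xk k..xk (k+1)} (\<lambda>t. (y' t)^2)))"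
  have np: "real n > 0" using assms(2) by simp
  have xks: "a \<le> xk k" "xk (k+1) \<le> b" "xk (k+1) - xk k = (b - a) / real n" if "k < n" for k
  proof -
    show "a \<le> xk k" unfolding xk_def using assms(1) np by simp
    have "real (k+1) / real n \<le> 1" using that np by simp
    then have "real (k+1) / real n * (b - a) \<le> 1 * (b - a)"
      using assms(1) by (intro mult_right_mono) auto
    then show "xk (k+1) \<le> b" unfolding xk_def by simp
    show "xk (k+1) - xk k = (b - a) / real n" unfolding xk_def using np by (simp add: field_simps)
  qed
  have bnd: "\<bar>y x\<bar> \<le> F k" if "k < n" "xk k \<le> x" "x \<le> xk (k+1)" for k x
  proof -
    have sub: "{xk k..xk (k+1)} \<subseteq> {a..b}" using xks[OF that(1)] by auto
    have "\<bar>y x\<bar> \<le> (1/2) * \<bar>y (xk k) + y (xk (k+1))\<bar> + (1/2) * sqrt (xk (k+1) - xk k)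
        * sqrt (integral {xk k..xk (k+1)} (\<lambda>t. (y' t)^2))"
    proof (rule interval_bound)
      show "xk k \<le> xk (k+1)" using that by simp
      show "continuous_on {xk k..xk (k+1)} y'" using continuous_on_subset[OF assms(3) sub] .
      show "x \<in> {xk k..xk (k+1)}" using that by simp
      fix t assume "t \<in> {xk k..xk (k+1)}"
      then show "(y has_real_derivative y' t) (at t within {xk k..xk (k+1)})"
        using assms(4)[of t] sub by (auto intro: has_field_derivative_subset)
    qed
    then show ?thesis unfolding F_def using xks[OF that(1)] by simp
  qed
  have fin: "finite (F ` {0..n-1})" by simp
  have cov: "\<exists>k<n. xk k \<le> x \<and> x \<le> xk (k+1)" if x: "x \<in> {a..b}" for x
  proof (cases "x = b")
    case True
    have "n - 1 < n" "Suc (n - 1) = n" using assms(2) by auto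
    moreover have "xk (n - 1) \<le> x" using xks(1)[of "n-1"] xks(3)[of "n-1"] True \<open>Suc (n-1) = n\<close>
      unfolding xk_def using np assms(1) by (auto simp: field_simps)
    moreover have "xk n = x" unfolding xk_def using True np by simp
    ultimately show ?thesis by (intro exI[of _ "n-1"]) auto
  next
    case False
    define h where "h = (b - a) / real n"
    have hp: "h > 0" unfolding h_def using assms(1) np by simp
    define t where "t = (x - a) / h"
    have t0: "t \<ge> 0" unfolding t_def using x hp by simp
    have tn: "t < real n" unfolding t_def h_def using x False np assms(1)
      by (auto simp: field_simps)
    define k where "k = nat \<lfloor>t\<rfloor>"
    have k1: "real k \<le> t" "t < real k + 1" unfolding k_def using t0
      by (auto simp: of_nat_nat)
    have kn: "k < n" using k1 tn by linarith
    have xe: "x = a + t * h" unfolding t_def using hp by simp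
    have xkk: "xk j = a + real j * h" for j unfolding xk_def h_def by simp
    have "xk k \<le> x" unfolding xkk xe using k1 hp by (simp add: mult_right_mono)
    moreover have "x \<le> xk (k+1)" unfolding xkk xe using k1 hp by (simp add: mult_right_mono)
    ultimately show ?thesis using kn by blast
  qed
  have "(SUP x\<in>{a..b}. \<bar>y x\<bar>) \<le> Max (F ` {0..n-1})"
  proof (rule cSUP_least)
    show "{a..b} \<noteq> {}" using assms(1) by simp
    fix x assume "x \<in> {a..b}"
    then obtain k where k: "k < n" "xk k \<le> x" "x \<le> xk (k+1)" using cov by blast
    have "\<bar>y x\<bar> \<le> F k" by (rule bnd[OF k])
    also have "F k \<le> Max (F ` {0..n-1})" using k(1) by (intro Max_ge fin) auto
    finally show "\<bar>y x\<bar> \<le> Max (F ` {0..n-1})" .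
  qed
  then show ?thesis unfolding F_def .
qed

end
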